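(* Let $\Phi=\bigvee_{j=1}^J\phi_j$ be a pleasant UCQ over $\Sigma$ and let $D$ be a structure over $\Sigma$. Then $\mathtt{cq}(\Phi)\odot\text{Þ}(D)=1+\Phi\odot D$.
   Context: Structures are finite relational structures; constants are interpreted in the vertex set $\mathcal V(D)$. For a CQ $\phi$ and structure $D$, $\phi\odot D$ is the number of maps $h:var(\phi)\to\mathcal V(D)$ sending every atom of $\phi$ (with constants interpreted) to a fact of $D$; for a UCQ $\Phi=\bigvee_j\phi_j$ (pairwise variable-disjoint disjuncts) $\Phi\odot D:=\sum_j\phi_j\odot D$. A query is pleasant if each atom contains at least one variable. Fix a relational signature $\Sigma$ (possibly with constants, not containing the symbols below) and $\Sigma^+=\Sigma\cup\{V,R,\mathsf{mars},\mathsf{venus}\}$ with $V,R$ fresh binary relations and $\mathsf{mars},\mathsf{venus}$ fresh constants. Let $\mathtt{Good}$ be the variable-free CQ consisting of $V(\mathsf{venus},\mathsf{venus})$, $R(\mathsf{venus},\mathsf{venus})$ and all atoms $A(t_1,\dots,t_k)$ with $A\in\Sigma$, each $t_i$ either $\mathsf{venus}$ or a constant of $\Sigma$, and $\mathsf{venus}$ occurring among the $t_i$ at least once. $\mathtt{Planet}(x):=R(\mathsf{venus},x)\wedge R(x,\mathsf{venus})$. $x\rhd\phi:=\phi\wedge\mathtt{Planet}(x)\wedge\bigwedge_{y\in var(\phi)}V(x,y)$. $\mathtt{RClique}_J(x_1,\dots,x_J):=\bigwedge_{j}\mathtt{Planet}(x_j)\wedge\bigwedge_{j<j'}(R(x_j,x_{j'})\wedge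 R(x_{j'},x_j))$. For a pleasant UCQ $\Phi=\bigvee_{j=1}^J\phi_j$ over $\Sigma$, $\mathtt{cq}(\Phi):=\mathtt{RClique}_J(x_1,\dots,x_J)\wedge\bigwedge_{j=1}^J(x_j\rhd\phi_j)$ with fresh variables $x_1,\dots,x_J$. The marsification $\text{Þ}(D)$ of a structure $D$ over $\Sigma$ is the structure over $\Sigma^+$ whose elements are those of $D$ together with two new distinct elements interpreting $\mathsf{mars}$ and $\mathsf{venus}$, and whose facts are: all atoms of $\mathtt{Good}\wedge\mathtt{Planet}(\mathsf{mars})$, all facts of $D$, and $V(\mathsf{mars},a)$ for every $a\in\mathcal V(D)$. *)

theory Defs
  imports "HOL-Library.FuncSet"
begin

text \<open>A relational signature Sigma is given by a finite set Rs of relation symbols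
  (of type 'r) with arity function ar, and a finite set Cs of constants (of type 'c).\<close>

datatype ('v, 'c) trm = Var 'v | Cst 'c

type_synonym ('r, 'v, 'c) atom = "'r \<times> ('v, 'c) trm list"

text \<open>A CQ is a finite set of atoms (their conjunction).\<close>
type_synonym ('r, 'v, 'c) cq = "('r, 'v, 'c) atom set"

text \<open>A UCQ is a list of CQs (its disjuncts phi_1 ... phi_J).\<close>
type_synonym ('r, 'v, 'c) ucq = "('r, 'v, 'c) cq list"

record ('r, 'c, 'e) rstruct =
  elems :: "'e set"
  facts :: "('r \<times> 'e list) set"
  cint  :: "'c \<Rightarrow> 'e"

definition wf_struct ::
  "'r set \<Rightarrow> ('r \<Rightarrow> nat) \<Rightarrow> 'c set \<Rightarrow> ('r, 'c, 'e) rstruct \<Rightarrow> bool" where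
  "wf_struct Rs ar Cs D \<longleftrightarrow>
     finite (elems D) \<and> finite (facts D) \<and>
     (\<forall>(r, es) \<in> facts D. r \<in> Rs \<and> length es = ar r \<and> set es \<subseteq> elems D) \<and>
     (\<forall>c \<in> Cs. cint D c \<in> elems D)"

fun tvars :: "('v, 'c) trm \<Rightarrow> 'v set" where
  "tvars (Var v) = {v}"
| "tvars (Cst c) = {}"

definition avars :: "('r, 'v, 'c) atom \<Rightarrow> 'v set" where
  "avars a = (\<Union>t \<in> set (snd a). tvars t)"

definition qvars :: "('r, 'v, 'c) cq \<Rightarrow> 'v set" where
  "qvars \<phi> = (\<Union>a \<in> \<phi>. avars a)"

definition cq_over :: "'r set \<Rightarrow> ('r \<Rightarrow> nat) \<Rightarrow> 'c set \<Rightarrow> ('r, 'v, 'c) cq \<Rightarrow> bool" where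
  "cq_over Rs ar Cs \<phi> \<longleftrightarrow> finite \<phi> \<and>
     (\<forall>(r, ts) \<in> \<phi>. r \<in> Rs \<and> length ts = ar r \<and> (\<forall>c. Cst c \<in> set ts \<longrightarrow> c \<in> Cs))"

definition pleasant_cq :: "('r, 'v, 'c) cq \<Rightarrow> bool" where
  "pleasant_cq \<phi> \<longleftrightarrow> (\<forall>a \<in> \<phi>. avars a \<noteq> {})"

definition pleasant_ucq :: "('r, 'v, 'c) ucq \<Rightarrow> bool" where
  "pleasant_ucq \<Phi> \<longleftrightarrow> (\<forall>\<phi> \<in> set \<Phi>. pleasant_cq \<phi>)"

definition var_disjoint :: "('r, 'v, 'c) ucq \<Rightarrow> bool" where
  "var_disjoint \<Phi> \<longleftrightarrow>
     (\<forall>i < length \<Phi>. \<forall>j < length \<Phi>. i \<noteq> j \<longrightarrow> qvars (\<Phi> ! i) \<inter> qvars (\<Phi> ! j) = {})"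

fun evalt :: "('v \<Rightarrow> 'e) \<Rightarrow> ('c \<Rightarrow> 'e) \<Rightarrow> ('v, 'c) trm \<Rightarrow> 'e" where
  "evalt h I (Var v) = h v"
| "evalt h I (Cst c) = I c"

text \<open>phi \<odot> D: number of maps h : var(phi) \<rightarrow> V(D) sending every atom to a fact.\<close>
definition count_cq :: "('r, 'v, 'c) cq \<Rightarrow> ('r, 'c, 'e) rstruct \<Rightarrow> nat" where
  "count_cq \<phi> D = card {h \<in> qvars \<phi> \<rightarrow>\<^sub>E elems D.
      \<forall>(r, ts) \<in> \<phi>. (r, map (evalt h (cint D)) ts) \<in> facts D}"

definition count_ucq :: "('r, 'v, 'c) ucq \<Rightarrow> ('r, 'c, 'e) rstruct \<Rightarrow> nat" where
  "count_ucq \<Phi> D = (\<Sum>\<phi> \<leftarrow> \<Phi>. count_cq \<phi> D)"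

datatype 'r relp = RelS 'r | RelV | RelR
datatype 'c constp = ConS 'c | Mars | Venus
datatype 'e elp = ElS 'e | ElMars | ElVenus

fun arp :: "('r \<Rightarrow> nat) \<Rightarrow> 'r relp \<Rightarrow> nat" where
  "arp ar (RelS r) = ar r"
| "arp ar RelV = 2"
| "arp ar RelR = 2"

fun lift_trm :: "('v, 'c) trm \<Rightarrow> ('v + nat, 'c constp) trm" where
  "lift_trm (Var v) = Var (Inl v)"
| "lift_trm (Cst c) = Cst (ConS c)"

definition lift_cq :: "('r, 'v, 'c) cq \<Rightarrow> ('r relp, 'v + nat, 'c constp) cq" where
  "lift_cq \<phi> = (\<lambda>(r, ts). (RelS r, map lift_trm ts)) ` \<phi>"

definition Good :: "'r set \<Rightarrow> ('r \<Rightarrow> nat) \<Rightarrow> 'c set \<Rightarrow> ('r relp, 'w, 'c constp) cq" where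
  "Good Rs ar Cs =
     {(RelV, [Cst Venus, Cst Venus]), (RelR, [Cst Venus, Cst Venus])} \<union>
     {(RelS A, ts) | A ts. A \<in> Rs \<and> length ts = ar A \<and>
        set ts \<subseteq> Cst ` (insert Venus (ConS ` Cs)) \<and> Cst Venus \<in> set ts}"

definition Planet :: "('w, 'c constp) trm \<Rightarrow> ('r relp, 'w, 'c constp) cq" where
  "Planet t = {(RelR, [Cst Venus, t]), (RelR, [t, Cst Venus])}"

definition rhd :: "nat \<Rightarrow> ('r, 'v, 'c) cq \<Rightarrow> ('r relp, 'v + nat, 'c constp) cq" where
  "rhd x \<phi> = lift_cq \<phi> \<union> Planet (Var (Inr x)) \<union>
     {(RelV, [Var (Inr x), Var (Inl y)]) | y. y \<in> qvars \<phi>}"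

definition RClique :: "nat \<Rightarrow> ('r relp, 'v + nat, 'c constp) cq" where
  "RClique J = (\<Union>j < J. Planet (Var (Inr j))) \<union>
     {(RelR, [Var (Inr j), Var (Inr j')]) | j j'. j < J \<and> j' < J \<and> j \<noteq> j'}"

text \<open>cq(Phi), with fresh variables x_j = Inr j (j = 0 .. J-1).\<close>
definition cq_of :: "('r, 'v, 'c) ucq \<Rightarrow> ('r relp, 'v + nat, 'c constp) cq" where
  "cq_of \<Phi> = RClique (length \<Phi>) \<union> (\<Union>j < length \<Phi>. rhd j (\<Phi> ! j))"

fun ground_trm :: "('c constp \<Rightarrow> 'e) \<Rightarrow> ('w, 'c constp) trm \<Rightarrow> 'e" where
  "ground_trm I (Cst c) = I c"
| "ground_trm I (Var v) = undefined"

fun mars_cint :: "('c \<Rightarrow> 'e) \<Rightarrow> 'c constp \<Rightarrow> 'e elp" where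
  "mars_cint I (ConS c) = ElS (I c)"
| "mars_cint I Mars = ElMars"
| "mars_cint I Venus = ElVenus"

definition marsify ::
  "'r set \<Rightarrow> ('r \<Rightarrow> nat) \<Rightarrow> 'c set \<Rightarrow> ('r, 'c, 'e) rstruct \<Rightarrow> ('r relp, 'c constp, 'e elp) rstruct" where
  "marsify Rs ar Cs D =
     \<lparr> elems = ElS ` elems D \<union> {ElMars, ElVenus},
       facts = (\<lambda>(r, ts). (r, map (ground_trm (mars_cint (cint D))) ts)) `
                  (Good Rs ar Cs \<union> Planet (Cst Mars) :: ('r relp, unit, 'c constp) cq)
               \<union> (\<lambda>(r, es). (RelS r, map ElS es)) ` facts D
               \<union> {(RelV, [ElMars, ElS a]) | a. a \<in> elems D},
       cint = mars_cint (cint D) \<rparr>"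

end

theory Submission
  imports Defs
begin

definition hold :: "('r, 'w, 'c) cq \<Rightarrow> ('c \<Rightarrow> 'e) \<Rightarrow> ('r \<times> 'e list) set \<Rightarrow> ('w \<Rightarrow> 'e) \<Rightarrow> bool" where
  "hold \<phi> I F h \<longleftrightarrow> (\<forall>(r, ts) \<in> \<phi>. (r, map (evalt h I) ts) \<in> F)"

lemma hold_Un[simp]: "hold (A \<union> B) I F h \<longleftrightarrow> hold A I F h \<and> hold B I F h"
  unfolding hold_def by blast

lemma hold_UN[simp]: "hold (\<Union>i\<in>K. A i) I F h \<longleftrightarrow> (\<forall>i\<in>K. hold (A i) I F h)"
  unfolding hold_def by blast

lemma tvars_iff: "v \<in> tvars t \<longleftrightarrow> t = Var v"
  by (cases t) auto

lemma mem_qvars: "v \<in> qvars \<phi> \<longleftrightarrow> (\<exists>r ts. (r, ts) \<in> \<phi> \<and> Var v \<in> set ts)"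
  unfolding qvars_def avars_def by (auto simp: tvars_iff) force+

lemma lift_eq_Var: "lift_trm t = Var w \<longleftrightarrow> (\<exists>v. w = Inl v \<and> t = Var v)"
  by (cases t) auto

lemma Var_in_lift: "Var w \<in> set (map lift_trm ts) \<longleftrightarrow> (\<exists>v. w = Inl v \<and> Var v \<in> set ts)"
  unfolding set_map image_iff by (auto simp: lift_eq_Var eq_commute[of "Var w" "lift_trm _"])

lemma qvars_Un[simp]: "qvars (A \<union> B) = qvars A \<union> qvars B"
  unfolding qvars_def by blast

lemma qvars_UN[simp]: "qvars (\<Union>i\<in>K. A i) = (\<Union>i\<in>K. qvars (A i))"
  unfolding qvars_def by blast

lemma qvars_Planet[simp]: "qvars (Planet (Var v)) = {v}"
  unfolding qvars_def avars_def Planet_def by auto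

lemma mem_qvars_lift: "v \<in> qvars (lift_cq \<phi>) \<longleftrightarrow> (\<exists>r ts. (r, ts) \<in> \<phi> \<and> Var v \<in> set (map lift_trm ts))"
proof
  assume "v \<in> qvars (lift_cq \<phi>)"
  then show "\<exists>r ts. (r, ts) \<in> \<phi> \<and> Var v \<in> set (map lift_trm ts)"
    unfolding mem_qvars lift_cq_def by (auto simp del: set_map)
next
  assume "\<exists>r ts. (r, ts) \<in> \<phi> \<and> Var v \<in> set (map lift_trm ts)"
  then obtain r ts where "(r, ts) \<in> \<phi>" "Var v \<in> set (map lift_trm ts)" by blast
  moreover have "(RelS r, map lift_trm ts) \<in> lift_cq \<phi>"
    using calculation(1) unfolding lift_cq_def by force
  ultimately show "v \<in> qvars (lift_cq \<phi>)" unfolding mem_qvars by blast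
qed

lemma qvars_lift[simp]: "qvars (lift_cq \<phi>) = Inl ` qvars \<phi>"
  unfolding set_eq_iff mem_qvars_lift Var_in_lift by (auto simp: mem_qvars intro!: imageI) blast

lemma qvars_Vset: "qvars {(RelV, [Var (Inr x), Var (Inl y)]) | y. y \<in> Y} \<subseteq> insert (Inr x) (Inl ` Y)"
  by (auto simp: mem_qvars)

lemma qvars_Vset2: "Inl ` Y \<subseteq> qvars {(RelV, [Var (Inr x), Var (Inl y)]) | y. y \<in> Y}"
  by (force simp: mem_qvars)

lemma qvars_rhd: "qvars (rhd x \<phi>) = insert (Inr x) (Inl ` qvars \<phi>)"
  unfolding rhd_def using qvars_Vset[of x "qvars \<phi>"] qvars_Vset2[of "qvars \<phi>" x] by auto

lemma qvars_Rset: "qvars {(RelR, [Var (Inr j), Var (Inr j')]) | j j'. j < J \<and> j' < J \<and> j \<noteq> j'} \<subseteq> Inr ` {..<J}"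
  by (auto simp: mem_qvars)

lemma qvars_RClique: "qvars (RClique J) = Inr ` {..<J}"
  unfolding RClique_def using qvars_Rset[of J] by auto

lemma qvars_cq_of: "qvars (cq_of \<Phi>) = Inr ` {..<length \<Phi>} \<union> (\<Union>j<length \<Phi>. Inl ` qvars (\<Phi> ! j))"
  unfolding cq_of_def by (auto simp: qvars_RClique qvars_rhd)

lemma hold_Planet: "hold (Planet (Var v)) I F h \<longleftrightarrow> (RelR, [I Venus, h v]) \<in> F \<and> (RelR, [h v, I Venus]) \<in> F"
  unfolding hold_def Planet_def by auto

lemma hold_lift: "hold (lift_cq \<phi>) I F h \<longleftrightarrow> (\<forall>(r, ts)\<in>\<phi>. (RelS r, map (evalt h I) (map lift_trm ts)) \<in> F)"
  unfolding hold_def lift_cq_def by auto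

lemma hold_Vset: "hold {(RelV, [Var (Inr x), Var (Inl y)]) | y. y \<in> Y} I F h \<longleftrightarrow> (\<forall>y\<in>Y. (RelV, [h (Inr x), h (Inl y)]) \<in> F)"
  unfolding hold_def by auto

lemma hold_Rset: "hold {(RelR, [Var (Inr j), Var (Inr j')]) | j j'. j < J \<and> j' < J \<and> j \<noteq> j'} I F h \<longleftrightarrow>
   (\<forall>j<J. \<forall>j'<J. j \<noteq> j' \<longrightarrow> (RelR, [h (Inr j), h (Inr j')]) \<in> F)"
proof -
  have "hold {(RelR, [Var (Inr j), Var (Inr j')]) | j j'. j < J \<and> j' < J \<and> j \<noteq> j'} I F h \<longleftrightarrow>
    (\<forall>j j'. j < J \<and> j' < J \<and> j \<noteq> j' \<longrightarrow> (RelR, map (evalt h I) [Var (Inr j), Var (Inr j')]) \<in> F)"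
    unfolding hold_def by blast
  then show ?thesis by auto
qed

lemma hold_cq_of: "hold (cq_of \<Phi>) I F h \<longleftrightarrow>
  (\<forall>j<length \<Phi>. (RelR, [I Venus, h (Inr j)]) \<in> F \<and> (RelR, [h (Inr j), I Venus]) \<in> F) \<and>
  (\<forall>j<length \<Phi>. \<forall>j'<length \<Phi>. j \<noteq> j' \<longrightarrow> (RelR, [h (Inr j), h (Inr j')]) \<in> F) \<and>
  (\<forall>j<length \<Phi>. \<forall>(r, ts)\<in>\<Phi> ! j. (RelS r, map (evalt h I) (map lift_trm ts)) \<in> F) \<and>
  (\<forall>j<length \<Phi>. \<forall>y\<in>qvars (\<Phi> ! j). (RelV, [h (Inr j), h (Inl y)]) \<in> F)"
  unfolding cq_of_def RClique_def rhd_def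
  by (simp add: hold_Planet hold_lift hold_Vset hold_Rset) blast

locale mt =
  fixes Rs :: "'r set" and ar :: "'r \<Rightarrow> nat" and Cs :: "'c set"
    and \<Phi> :: "('r, 'v, 'c) ucq" and D :: "('r, 'c, 'e) rstruct"
  assumes cqo: "\<forall>\<phi> \<in> set \<Phi>. cq_over Rs ar Cs \<phi>"
    and vd: "var_disjoint \<Phi>"
    and pl: "pleasant_ucq \<Phi>"
    and wf: "wf_struct Rs ar Cs D"
begin

abbreviation "FM \<equiv> facts (marsify Rs ar Cs D)"

lemma FM_dest:
  assumes "(r, es) \<in> FM"
  shows "(r = RelV \<and> es = [ElVenus, ElVenus]) \<or>
    (r = RelR \<and> (es = [ElVenus, ElVenus] \<or> es = [ElVenus, ElMars] \<or> es = [ElMars, ElVenus])) \<or>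
    (\<exists>A. r = RelS A \<and> ElVenus \<in> set es) \<or>
    (\<exists>A es'. r = RelS A \<and> es = map ElS es' \<and> (A, es') \<in> facts D) \<or>
    (r = RelV \<and> (\<exists>a\<in>elems D. es = [ElMars, ElS a]))"
proof -
  let ?g = "ground_trm (mars_cint (cint D))"
  have "(\<exists>ts. (r, ts) \<in> (Good Rs ar Cs \<union> Planet (Cst Mars) :: ('r relp, unit, 'c constp) cq) \<and> es = map ?g ts) \<or>
    (\<exists>A es'. r = RelS A \<and> es = map ElS es' \<and> (A, es') \<in> facts D) \<or>
    (r = RelV \<and> (\<exists>a\<in>elems D. es = [ElMars, ElS a]))"
    using assms unfolding marsify_def by auto
  moreover have "(\<exists>A. r = RelS A \<and> ElVenus \<in> set es) \<or> (r = RelV \<and> es = [ElVenus, ElVenus]) \<or>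
    (r = RelR \<and> (es = [ElVenus, ElVenus] \<or> es = [ElVenus, ElMars] \<or> es = [ElMars, ElVenus]))"
    if "(r, ts) \<in> (Good Rs ar Cs \<union> Planet (Cst Mars) :: ('r relp, unit, 'c constp) cq)" "es = map ?g ts" for ts
  proof -
    have "?g (Cst Venus) = ElVenus" by simp
    then have "Cst Venus \<in> set ts \<Longrightarrow> ElVenus \<in> set es" using that(2)
      by (metis image_eqI list.set_map)
    then show ?thesis using that unfolding Good_def Planet_def by auto
  qed
  ultimately show ?thesis by blast
qed

lemma FM_R1: "(RelR, [ElVenus, ElVenus]) \<in> FM"
  unfolding marsify_def Good_def Planet_def
  by (auto intro!: rev_image_eqI[of "(RelR, [Cst Venus, Cst Venus])"])

lemma FM_R2: "(RelR, [ElVenus, ElMars]) \<in> FM"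
  unfolding marsify_def Good_def Planet_def
  by (auto intro!: rev_image_eqI[of "(RelR, [Cst Venus, Cst Mars])"])

lemma FM_R3: "(RelR, [ElMars, ElVenus]) \<in> FM"
  unfolding marsify_def Good_def Planet_def
  by (auto intro!: rev_image_eqI[of "(RelR, [Cst Mars, Cst Venus])"])

lemma FM_V1: "(RelV, [ElVenus, ElVenus]) \<in> FM"
  unfolding marsify_def Good_def Planet_def
  by (auto intro!: rev_image_eqI[of "(RelV, [Cst Venus, Cst Venus])"])

lemma FM_V2: "a \<in> elems D \<Longrightarrow> (RelV, [ElMars, ElS a]) \<in> FM"
  unfolding marsify_def by auto

lemma FM_R_iff: "(RelR, [a, b]) \<in> FM \<longleftrightarrow>
   (a = ElVenus \<and> b = ElVenus) \<or> (a = ElVenus \<and> b = ElMars) \<or> (a = ElMars \<and> b = ElVenus)"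
  using FM_dest[of RelR "[a, b]"] FM_R1 FM_R2 FM_R3 by auto

lemma FM_V_iff: "(RelV, [a, b]) \<in> FM \<longleftrightarrow>
   (a = ElVenus \<and> b = ElVenus) \<or> (a = ElMars \<and> b \<in> ElS ` elems D)"
  using FM_dest[of RelV "[a, b]"] FM_V1 FM_V2 by auto

lemma FM_S_iff: "(RelS A, map ElS es) \<in> FM \<longleftrightarrow> (A, es) \<in> facts D"
proof
  assume "(RelS A, map ElS es) \<in> FM"
  from FM_dest[OF this] show "(A, es) \<in> facts D"
    by (auto simp: inj_map_eq_map inj_def)
next
  assume "(A, es) \<in> facts D"
  then show "(RelS A, map ElS es) \<in> FM" unfolding marsify_def by auto
qed

lemma FM_Good:
  fixes ts :: "('x, 'c) trm list"
  assumes "A \<in> Rs" "length ts = ar A" "\<forall>c. Cst c \<in> set ts \<longrightarrow> c \<in> Cs" "Var v \<in> set ts"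
  shows "(RelS A, map (\<lambda>t. case t of Var _ \<Rightarrow> ElVenus | Cst c \<Rightarrow> ElS (cint D c)) ts) \<in> FM"
proof -
  define ts' :: "(unit, 'c constp) trm list" where
    "ts' = map (\<lambda>t. case t of Var _ \<Rightarrow> Cst Venus | Cst c \<Rightarrow> Cst (ConS c)) ts"
  have 1: "(RelS A, ts') \<in> Good Rs ar Cs"
    unfolding Good_def ts'_def using assms
    by (auto split: trm.splits intro!: rev_image_eqI[of "Var v"])
  have 2: "map (ground_trm (mars_cint (cint D))) ts' = map (\<lambda>t. case t of Var _ \<Rightarrow> ElVenus | Cst c \<Rightarrow> ElS (cint D c)) ts"
    unfolding ts'_def by (auto split: trm.splits)
  show ?thesis unfolding marsify_def
    using 1 2 by (force intro!: rev_image_eqI[of "(RelS A, ts')"])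
qed


lemma finite_tvars[simp]: "finite (tvars t)"
  by (cases t) auto

lemma finite_qvars: "finite \<phi> \<Longrightarrow> finite (qvars \<phi>)"
  unfolding qvars_def avars_def by auto

abbreviation "J \<equiv> length \<Phi>"
abbreviation "Q \<equiv> qvars (cq_of \<Phi>)"
abbreviation "IM \<equiv> mars_cint (cint D)"

lemma cint_M: "cint (marsify Rs ar Cs D) = IM"
  by (simp add: marsify_def)

lemma elems_M: "elems (marsify Rs ar Cs D) = ElS ` elems D \<union> {ElMars, ElVenus}"
  by (simp add: marsify_def)

lemma atom_props:
  assumes "j < J" "(r, ts) \<in> \<Phi> ! j"
  shows "r \<in> Rs" "length ts = ar r" "\<forall>c. Cst c \<in> set ts \<longrightarrow> c \<in> Cs" "\<exists>v. Var v \<in> set ts"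
proof -
  have m: "\<Phi> ! j \<in> set \<Phi>" using assms(1) by simp
  then have "cq_over Rs ar Cs (\<Phi> ! j)" using cqo by blast
  then show "r \<in> Rs" "length ts = ar r" "\<forall>c. Cst c \<in> set ts \<longrightarrow> c \<in> Cs"
    using assms(2) unfolding cq_over_def by auto
  have "pleasant_cq (\<Phi> ! j)" using pl m unfolding pleasant_ucq_def by blast
  then have "avars (r, ts) \<noteq> {}" using assms(2) unfolding pleasant_cq_def by blast
  then show "\<exists>v. Var v \<in> set ts" unfolding avars_def by (auto simp: tvars_iff)
qed

lemma finite_phi: "j < J \<Longrightarrow> finite (\<Phi> ! j)"
  using cqo unfolding cq_over_def by simp

lemma var_in: "(r, ts) \<in> \<phi> \<Longrightarrow> Var y \<in> set ts \<Longrightarrow> y \<in> qvars \<phi>"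
  unfolding mem_qvars by blast

lemma disj: "j < J \<Longrightarrow> k < J \<Longrightarrow> j \<noteq> k \<Longrightarrow> y \<in> qvars (\<Phi> ! j) \<Longrightarrow> y \<notin> qvars (\<Phi> ! k)"
  using vd unfolding var_disjoint_def by blast

lemma eval_lift: "evalt h IM (lift_trm t) = (case t of Var y \<Rightarrow> h (Inl y) | Cst c \<Rightarrow> ElS (cint D c))"
  by (cases t) auto

lemma venus_atom:
  assumes "j < J" "(r, ts) \<in> \<Phi> ! j" "\<forall>y\<in>qvars (\<Phi> ! j). h (Inl y) = ElVenus"
  shows "(RelS r, map (evalt h IM) (map lift_trm ts)) \<in> FM"
proof -
  have eq: "map (evalt h IM) (map lift_trm ts) = map (\<lambda>t. case t of Var _ \<Rightarrow> ElVenus | Cst c \<Rightarrow> ElS (cint D c)) ts"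
    unfolding map_map
  proof (rule map_cong[OF refl])
    fix t assume "t \<in> set ts"
    show "(evalt h IM \<circ> lift_trm) t = (case t of Var _ \<Rightarrow> ElVenus | Cst c \<Rightarrow> ElS (cint D c))"
      by (cases t) (use assms(2,3) var_in[OF assms(2)] \<open>t \<in> set ts\<close> in auto)
  qed
  obtain v where "Var v \<in> set ts" using atom_props[OF assms(1,2)] by blast
  then show ?thesis unfolding eq using atom_props[OF assms(1,2)] by (intro FM_Good) auto
qed

lemma mars_eval:
  assumes "(r, ts) \<in> \<phi>" "\<forall>y\<in>qvars \<phi>. h (Inl y) = ElS (g y)"
  shows "map (evalt h IM) (map lift_trm ts) = map ElS (map (evalt g (cint D)) ts)"
  unfolding map_map
proof (rule map_cong[OF refl])
  fix t assume "t \<in> set ts"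
  show "(evalt h IM \<circ> lift_trm) t = (ElS \<circ> evalt g (cint D)) t"
    by (cases t) (use assms var_in[OF assms(1)] \<open>t \<in> set ts\<close> in auto)
qed

lemma Q_Inr: "k < J \<Longrightarrow> Inr k \<in> Q"
  by (simp add: qvars_cq_of)

lemma Q_Inl: "k < J \<Longrightarrow> y \<in> qvars (\<Phi> ! k) \<Longrightarrow> Inl y \<in> Q"
  by (auto simp: qvars_cq_of)

definition "S = {h \<in> Q \<rightarrow>\<^sub>E elems (marsify Rs ar Cs D). hold (cq_of \<Phi>) IM FM h}"
definition "sat j = {g \<in> qvars (\<Phi> ! j) \<rightarrow>\<^sub>E elems D. hold (\<Phi> ! j) (cint D) (facts D) g}"
definition "hV = restrict (\<lambda>_. ElVenus) Q"
definition "mk j g = restrict (\<lambda>v. case v of Inr k \<Rightarrow> if k = j then ElMars else ElVenus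
   | Inl y \<Rightarrow> if y \<in> qvars (\<Phi> ! j) then ElS (g y) else ElVenus) Q"

lemma count_S: "count_cq (cq_of \<Phi>) (marsify Rs ar Cs D) = card S"
  unfolding count_cq_def S_def hold_def cint_M ..

lemma count_sat: "count_cq (\<Phi> ! j) D = card (sat j)"
  unfolding count_cq_def sat_def hold_def ..

lemma hV_S: "hV \<in> S"
proof -
  have "hV \<in> Q \<rightarrow>\<^sub>E elems (marsify Rs ar Cs D)" unfolding hV_def elems_M by auto
  moreover have "hold (cq_of \<Phi>) IM FM hV"
    unfolding hold_cq_of
    using Q_Inr Q_Inl venus_atom[of _ _ _ hV]
    by (auto simp: hV_def FM_R_iff FM_V_iff)
  ultimately show ?thesis unfolding S_def by blast
qed


lemma mk_Inr: "k < J \<Longrightarrow> mk j g (Inr k) = (if k = j then ElMars else ElVenus)"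
  unfolding mk_def using Q_Inr by simp

lemma mk_Inl: "k < J \<Longrightarrow> y \<in> qvars (\<Phi> ! k) \<Longrightarrow>
   mk j g (Inl y) = (if y \<in> qvars (\<Phi> ! j) then ElS (g y) else ElVenus)"
  unfolding mk_def using Q_Inl by simp

lemma mk_S:
  assumes "j < J" "g \<in> sat j"
  shows "mk j g \<in> S"
proof -
  have gP: "g \<in> qvars (\<Phi> ! j) \<rightarrow>\<^sub>E elems D" and gh: "hold (\<Phi> ! j) (cint D) (facts D) g"
    using assms(2) unfolding sat_def by auto
  have "mk j g \<in> Q \<rightarrow>\<^sub>E elems (marsify Rs ar Cs D)"
    unfolding mk_def elems_M using gP by (auto simp: PiE_iff split: sum.splits)
  moreover have "hold (cq_of \<Phi>) IM FM (mk j g)"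
    unfolding hold_cq_of
  proof (intro conjI allI impI ballI)
    fix k assume "k < J"
    then show "(RelR, [IM Venus, mk j g (Inr k)]) \<in> FM" "(RelR, [mk j g (Inr k), IM Venus]) \<in> FM"
      by (auto simp: mk_Inr FM_R_iff)
  next
    fix k k' assume "k < J" "k' < J" "k \<noteq> k'"
    then show "(RelR, [mk j g (Inr k), mk j g (Inr k')]) \<in> FM"
      by (auto simp: mk_Inr FM_R_iff)
  next
    fix k y assume k: "k < J" and y: "y \<in> qvars (\<Phi> ! k)"
    show "(RelV, [mk j g (Inr k), mk j g (Inl y)]) \<in> FM"
    proof (cases "k = j")
      case True
      then show ?thesis using k y gP by (auto simp: mk_Inr mk_Inl FM_V_iff)
    next
      case False
      then have "y \<notin> qvars (\<Phi> ! j)" using disj[OF k assms(1) False y] by blast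
      then show ?thesis using k y False by (auto simp: mk_Inr mk_Inl FM_V_iff)
    qed
  next
    fix k x assume k: "k < J" and x: "x \<in> \<Phi> ! k"
    obtain r ts where x': "x = (r, ts)" by force
    have "(RelS r, map (evalt (mk j g) IM) (map lift_trm ts)) \<in> FM"
    proof (cases "k = j")
      case True
      have "\<forall>y\<in>qvars (\<Phi> ! k). mk j g (Inl y) = ElS (g y)"
        using k True by (auto simp: mk_Inl)
      from mars_eval[OF x[unfolded x'] this] have e:
        "map (evalt (mk j g) IM) (map lift_trm ts) = map ElS (map (evalt g (cint D)) ts)" .
      have "(r, map (evalt g (cint D)) ts) \<in> facts D"
        using gh x x' True unfolding hold_def by auto
      then show ?thesis unfolding e using FM_S_iff by blast
    next
      case False
      have "\<forall>y\<in>qvars (\<Phi> ! k). mk j g (Inl y) = ElVenus"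
        using k False disj[OF k assms(1) False] by (auto simp: mk_Inl)
      then show ?thesis using venus_atom[OF k x[unfolded x']] by blast
    qed
    then show "case x of (r, ts) \<Rightarrow> (RelS r, map (evalt (mk j g) IM) (map lift_trm ts)) \<in> FM"
      using x' by simp
  qed
  ultimately show ?thesis unfolding S_def by blast
qed

lemma S_cases:
  assumes "h \<in> S"
  shows "h = hV \<or> (\<exists>j<J. \<exists>g\<in>sat j. h = mk j g)"
proof -
  have hP: "h \<in> Q \<rightarrow>\<^sub>E elems (marsify Rs ar Cs D)" and hh: "hold (cq_of \<Phi>) IM FM h"
    using assms unfolding S_def by auto
  note H = hh[unfolded hold_cq_of]
  have a: "h (Inr k) = ElVenus \<or> h (Inr k) = ElMars" if "k < J" for k
    using H that by (auto simp: FM_R_iff)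
  have b: "\<not> (h (Inr k) = ElMars \<and> h (Inr k') = ElMars)" if "k < J" "k' < J" "k \<noteq> k'" for k k'
    using H that by (fastforce simp: FM_R_iff)
  have c: "(h (Inr k) = ElVenus \<and> h (Inl y) = ElVenus) \<or> (h (Inr k) = ElMars \<and> h (Inl y) \<in> ElS ` elems D)"
    if "k < J" "y \<in> qvars (\<Phi> ! k)" for k y
    using H that by (auto simp: FM_V_iff)
  have Qc: "(\<exists>k<J. v = Inr k) \<or> (\<exists>k<J. \<exists>y\<in>qvars (\<Phi> ! k). v = Inl y)" if "v \<in> Q" for v
    using that by (auto simp: qvars_cq_of)
  show ?thesis
  proof (cases "\<forall>k<J. h (Inr k) = ElVenus")
    case True
    have "h = hV"
    proof (rule PiE_ext[OF hP])
      show "hV \<in> Q \<rightarrow>\<^sub>E elems (marsify Rs ar Cs D)" using hV_S unfolding S_def by blast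
      fix v assume "v \<in> Q"
      then show "h v = hV v" using Qc[of v] True c unfolding hV_def by fastforce
    qed
    then show ?thesis by blast
  next
    case False
    then obtain j where j: "j < J" "h (Inr j) = ElMars" using a by blast
    define g where "g = restrict (\<lambda>y. case h (Inl y) of ElS a \<Rightarrow> a | _ \<Rightarrow> undefined) (qvars (\<Phi> ! j))"
    have hg: "h (Inl y) = ElS (g y) \<and> g y \<in> elems D" if "y \<in> qvars (\<Phi> ! j)" for y
      using c[OF j(1) that] j(2) that unfolding g_def by auto
    have gP: "g \<in> qvars (\<Phi> ! j) \<rightarrow>\<^sub>E elems D" using hg unfolding g_def by auto
    have gh: "hold (\<Phi> ! j) (cint D) (facts D) g"
      unfolding hold_def
    proof (intro ballI, clarify)
      fix r ts assume x: "(r, ts) \<in> \<Phi> ! j"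
      have f: "(RelS r, map (evalt h IM) (map lift_trm ts)) \<in> FM" using H j(1) x by blast
      have e: "map (evalt h IM) (map lift_trm ts) = map ElS (map (evalt g (cint D)) ts)"
        using mars_eval[OF x] hg by blast
      have "(RelS r, map ElS (map (evalt g (cint D)) ts)) \<in> FM" using f unfolding e .
      then show "(r, map (evalt g (cint D)) ts) \<in> facts D" using FM_S_iff by blast
    qed
    have gs: "g \<in> sat j" unfolding sat_def using gP gh by blast
    have "h = mk j g"
    proof (rule PiE_ext[OF hP])
      show "mk j g \<in> Q \<rightarrow>\<^sub>E elems (marsify Rs ar Cs D)" using mk_S[OF j(1) gs] unfolding S_def by blast
      fix v assume "v \<in> Q"
      then consider (r) k where "k < J" "v = Inr k" | (l) k y where "k < J" "y \<in> qvars (\<Phi> ! k)" "v = Inl y"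
        using Qc by blast
      then show "h v = mk j g v"
      proof cases
        case r
        then show ?thesis using a[of k] b[of j k] j by (auto simp: mk_Inr)
      next
        case l
        show ?thesis
        proof (cases "k = j")
          case True
          then show ?thesis using l hg by (auto simp: mk_Inl)
        next
          case False
          have "h (Inr k) = ElVenus" using a[of k] b[of j k] j l False by auto
          then have "h (Inl y) = ElVenus" using c[of k y] l by auto
          moreover have "y \<notin> qvars (\<Phi> ! j)" using disj[OF l(1) j(1) False l(2)] .
          ultimately show ?thesis using l by (auto simp: mk_Inl)
        qed
      qed
    qed
    then show ?thesis using j gs by blast
  qed
qed

lemma mk_inj: "inj_on (mk j) (sat j)" if "j < J"
proof (rule inj_onI)
  fix g g' assume g: "g \<in> sat j" and g': "g' \<in> sat j" and eq: "mk j g = mk j g'"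
  show "g = g'"
  proof (rule PiE_ext)
    show "g \<in> qvars (\<Phi> ! j) \<rightarrow>\<^sub>E elems D" "g' \<in> qvars (\<Phi> ! j) \<rightarrow>\<^sub>E elems D"
      using g g' unfolding sat_def by auto
    fix y assume "y \<in> qvars (\<Phi> ! j)"
    then have "mk j g (Inl y) = ElS (g y)" "mk j g' (Inl y) = ElS (g' y)"
      using that by (auto simp: mk_Inl)
    then show "g y = g' y" using eq by simp
  qed
qed

lemma finite_sat: "j < J \<Longrightarrow> finite (sat j)"
proof -
  assume j: "j < J"
  have "finite (qvars (\<Phi> ! j) \<rightarrow>\<^sub>E elems D)"
    using finite_qvars[OF finite_phi[OF j]] wf unfolding wf_struct_def by (intro finite_PiE) auto
  then show ?thesis unfolding sat_def by auto
qed

lemma S_eq: "S = insert hV (\<Union>j<J. mk j ` sat j)"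
  using hV_S mk_S S_cases by blast

lemma main: "count_cq (cq_of \<Phi>) (marsify Rs ar Cs D) = 1 + count_ucq \<Phi> D"
proof -
  have fin: "\<forall>j\<in>{..<J}. finite (mk j ` sat j)" using finite_sat by auto
  have dis: "\<forall>j\<in>{..<J}. \<forall>k\<in>{..<J}. j \<noteq> k \<longrightarrow> mk j ` sat j \<inter> mk k ` sat k = {}"
    apply (auto simp: fun_eq_iff)
    subgoal for j k a b by (drule spec[of _ "Inr j"]) (simp add: mk_Inr)
    done
  have nV: "hV \<notin> (\<Union>j<J. mk j ` sat j)"
    by (auto simp: hV_def) (metis Q_Inr mk_Inr restrict_apply' elp.distinct(6))
  have "card S = Suc (card (\<Union>j<J. mk j ` sat j))"
    unfolding S_eq using nV fin by (simp add: card_insert_if)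
  also have "card (\<Union>j<J. mk j ` sat j) = (\<Sum>j<J. card (mk j ` sat j))"
    by (rule card_UN_disjoint) (use fin dis in auto)
  also have "\<dots> = (\<Sum>j<J. count_cq (\<Phi> ! j) D)"
    by (rule sum.cong) (auto simp: card_image mk_inj count_sat)
  also have "\<dots> = count_ucq \<Phi> D"
    unfolding count_ucq_def sum_list_sum_nth by (simp add: atLeast0LessThan)
  finally show ?thesis by (simp add: count_S)
qed

end

theorem mainTheorem10:
  fixes Rs :: "'r set" and ar :: "'r \<Rightarrow> nat" and Cs :: "'c set"
    and \<Phi> :: "('r, 'v, 'c) ucq" and D :: "('r, 'c, 'e) rstruct"
  assumes "finite Rs" and "finite Cs"
    and "\<forall>\<phi> \<in> set \<Phi>. cq_over Rs ar Cs \<phi>"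
    and "var_disjoint \<Phi>"
    and "pleasant_ucq \<Phi>"
    and "wf_struct Rs ar Cs D"
  shows "count_cq (cq_of \<Phi>) (marsify Rs ar Cs D) = 1 + count_ucq \<Phi> D"
proof -
  interpret mt Rs ar Cs \<Phi> D using assms by unfold_locales
  show ?thesis by (rule main)
qed

end
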